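(* Let $\Sigma$ be an alphabet with $|\Sigma|=3$. For every antimorphic involution $\theta$ on $\Sigma^*$, there exists an infinite word over $\Sigma$ that is pseudo-cube-free with respect to $\theta$.
   Context: A function $\theta:\Sigma^*\to\Sigma^*$ is an antimorphic involution if $\theta(uv)=\theta(v)\theta(u)$ and $\theta(\theta(w))=w$. A pseudo cube with respect to $\theta$ is a nonempty word $u_1u_2u_3$ such that for all $1\le i,j\le 3$, $u_i=u_j$ or $u_i=\theta(u_j)$. A word is pseudo-cube-free with respect to $\theta$ if no factor (contiguous subword) of it is a pseudo cube. *)

theory Defs
  imports Main
begin

definition antimorphic_involution :: "('a list \<Rightarrow> 'a list) \<Rightarrow> bool" where
  "antimorphic_involution \<theta> \<longleftrightarrow>
     (\<forall>u v. \<theta> (u @ v) = \<theta> v @ \<theta> u) \<and> (\<forall>w. \<theta> (\<theta> w) = w)"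

definition pseudo_cube :: "('a list \<Rightarrow> 'a list) \<Rightarrow> 'a list \<Rightarrow> bool" where
  "pseudo_cube \<theta> w \<longleftrightarrow> w \<noteq> [] \<and>
     (\<exists>u1 u2 u3. w = u1 @ u2 @ u3 \<and>
        (\<forall>x\<in>{u1, u2, u3}. \<forall>y\<in>{u1, u2, u3}. x = y \<or> x = \<theta> y))"

definition pseudo_cube_free_inf :: "('a list \<Rightarrow> 'a list) \<Rightarrow> (nat \<Rightarrow> 'a) \<Rightarrow> bool" where
  "pseudo_cube_free_inf \<theta> w \<longleftrightarrow> (\<forall>i j. \<not> pseudo_cube \<theta> (map w [i..<j]))"

end

theory Submission
  imports Defs
begin

fun tm :: "nat \<Rightarrow> bool" where
  "tm n = (if n = 0 then False else if even n then tm (n div 2) else \<not> tm (n div 2))"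

declare tm.simps[simp del]

lemma tm_even: "tm (2*n) = tm n"
  by (cases "n = 0") (simp_all add: tm.simps[of "2*n"] tm.simps[of 0])

lemma tm_odd: "tm (2*n+1) = (\<not> tm n)"
proof -
  have "tm (2*n+1) = (if 2*n+1 = 0 then False else if even (2*n+1) then tm ((2*n+1) div 2) else \<not> tm ((2*n+1) div 2))"
    by (rule tm.simps)
  then show ?thesis by simp
qed

lemma tm_no3: "\<not> (tm n = tm (n+1) \<and> tm (n+1) = tm (n+2))"
proof (cases "even n")
  case True
  then obtain m where "n = 2*m" by blast
  then show ?thesis using tm_even[of m] tm_odd[of m] by auto
next
  case False
  then obtain m where "n = 2*m+1" using oddE by blast
  then have "n+1 = 2*(m+1)" "n+2 = 2*(m+1)+1" by auto
  then show ?thesis using tm_even[of "m+1"] tm_odd[of "m+1"] by auto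
qed

lemma tm_cubefree:
  "0 < k \<Longrightarrow> \<forall>p. i \<le> p \<and> p < i + 2*k \<longrightarrow> tm p = tm (p+k) \<Longrightarrow> False"
proof (induction k arbitrary: i rule: less_induct)
  case (less k)
  note H = less.prems(2)
  show False
  proof (cases "k = 1")
    case True
    then show ?thesis using H[rule_format, of i] H[rule_format, of "i+1"] tm_no3[of i]
      by (auto simp: add.assoc)
  next
    case k1: False
    show ?thesis
    proof (cases "even k")
      case True
      then obtain m where km: "k = 2*m" by blast
      with less.prems have m0: "0 < m" "m < k" by auto
      define s where "s = (i+1) div 2"
      have "\<forall>p. s \<le> p \<and> p < s + 2*m \<longrightarrow> tm p = tm (p+m)"
      proof (intro allI impI)
        fix p assume p: "s \<le> p \<and> p < s + 2*m"
        have "i \<le> 2*p" "2*p < i + 2*k" using p km unfolding s_def by auto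
        then have "tm (2*p) = tm (2*p + k)" using H by blast
        also have "2*p + k = 2*(p+m)" using km by simp
        finally show "tm p = tm (p+m)" using tm_even[of p] tm_even[of "p+m"] by simp
      qed
      then show False using less.IH[OF m0(2) m0(1)] by blast
    next
      case False
      then obtain r where kr: "k = 2*r+1" using oddE by blast
      with k1 less.prems have r1: "1 \<le> r" by auto
      define n0 where "n0 = (i+1) div 2"
      have key: "tm (n+r) = tm (n+r+1)" if "i \<le> 2*n" "2*n+1 < i+2*k" for n
      proof -
        have a: "tm (2*n) = tm (2*n+k)" "tm (2*n+1) = tm (2*n+1+k)"
          using H that by auto
        have b: "2*n+k = 2*(n+r)+1" "2*n+1+k = 2*(n+r+1)" using kr by auto
        show ?thesis using a b tm_even[of n] tm_odd[of n] tm_even[of "n+r+1"] tm_odd[of "n+r"]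
          by auto
      qed
      have "tm (n0+r) = tm (n0+r+1)" using key[of n0] r1 kr unfolding n0_def by auto
      moreover have "tm (n0+1+r) = tm (n0+1+r+1)" using key[of "n0+1"] r1 kr unfolding n0_def by auto
      ultimately show False using tm_no3[of "n0+r"] by (simp add: add.commute add.left_commute)
    qed
  qed
qed


lemma theta_struct:
  assumes "antimorphic_involution \<theta>"
  shows "\<exists>g. (\<forall>w. \<theta> w = rev (map g w)) \<and> (\<forall>x. g (g x) = x)"
proof -
  have app: "\<And>u v. \<theta> (u @ v) = \<theta> v @ \<theta> u" and inv: "\<And>w. \<theta> (\<theta> w) = w"
    using assms unfolding antimorphic_involution_def by auto
  have "\<theta> [] = \<theta> [] @ \<theta> []" using app[of "[]" "[]"] by simp
  then have "length (\<theta> []) = length (\<theta> []) + length (\<theta> [])" by (metis length_append)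
  then have nil: "\<theta> [] = []" by simp
  have cons: "\<theta> (x # xs) = \<theta> xs @ \<theta> [x]" for x xs using app[of "[x]" xs] by simp
  have ne: "\<theta> [x] \<noteq> []" for x using inv[of "[x]"] nil by auto
  have len_ge: "length (\<theta> w) \<ge> length w" for w
  proof (induction w)
    case Nil then show ?case by simp
  next
    case (Cons x xs)
    then show ?case using cons[of x xs] ne[of x] by (cases "\<theta> [x]") auto
  qed
  have len1: "length (\<theta> [x]) = 1" for x
  proof -
    have "length (\<theta> (\<theta> [x])) \<ge> length (\<theta> [x])" by (rule len_ge)
    then have "length (\<theta> [x]) \<le> 1" using inv[of "[x]"] by simp
    then show ?thesis using ne[of x] by (cases "\<theta> [x]") auto
  qed
  define g where "g x = hd (\<theta> [x])" for x
  have sing: "\<theta> [x] = [g x]" for x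
    using len1[of x] unfolding g_def by (cases "\<theta> [x]") auto
  have tw: "\<theta> w = rev (map g w)" for w
  proof (induction w)
    case Nil then show ?case using nil by simp
  next
    case (Cons x xs) then show ?case using cons[of x xs] sing[of x] by simp
  qed
  have "g (g x) = x" for x using inv[of "[x]"] by (simp add: tw)
  with tw show ?thesis by blast
qed

lemma fixed_point:
  assumes "card (UNIV :: 'a set) = 3" "\<forall>x::'a. g (g x) = x"
  shows "\<exists>c a b. g c = c \<and> a \<noteq> c \<and> b \<noteq> c \<and> a \<noteq> b"
proof -
  obtain x y z :: 'a where U: "UNIV = {x,y,z}" "x \<noteq> y" "y \<noteq> z" "x \<noteq> z"
    using assms(1) card_3_iff by metis
  have gx: "g x \<in> {x,y,z}" "g y \<in> {x,y,z}" "g z \<in> {x,y,z}" using U(1) by auto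
  have "g x = x \<or> g y = y \<or> g z = z"
  proof (rule ccontr)
    assume N: "\<not> ?thesis"
    show False
    proof (cases "g x = y")
      case True
      then have "g y = x" using assms(2) by metis
      have "g z \<noteq> z" using N by blast
      moreover have "g z \<noteq> x" using \<open>g y = x\<close> assms(2) U(3) by metis
      moreover have "g z \<noteq> y" using True assms(2) U(4) by metis
      ultimately show False using gx by blast
    next
      case False
      then have "g x = z" using gx N by blast
      then have "g z = x" using assms(2) by metis
      have "g y \<noteq> y" using N by blast
      moreover have "g y \<noteq> x" using \<open>g z = x\<close> assms(2) U(3) by metis
      moreover have "g y \<noteq> z" using \<open>g x = z\<close> assms(2) U(2) by metis
      ultimately show False using gx by blast
    qed
  qed
  then show ?thesis
  proof (elim disjE)
    assume "g x = x" then show ?thesis using U(2-4) by (intro exI[of _ x] exI[of _ y] exI[of _ z]) auto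
  next
    assume "g y = y" then show ?thesis using U(2-4) by (intro exI[of _ y] exI[of _ x] exI[of _ z]) auto
  next
    assume "g z = z" then show ?thesis using U(2-4) by (intro exI[of _ z] exI[of _ x] exI[of _ y]) auto
  qed
qed

theorem mainTheorem11:
  fixes \<theta> :: "'a list \<Rightarrow> 'a list"
  assumes "card (UNIV :: 'a set) = 3"
    and "antimorphic_involution \<theta>"
  shows "\<exists>w :: nat \<Rightarrow> 'a. pseudo_cube_free_inf \<theta> w"
proof -
  obtain g where tw: "\<And>w. \<theta> w = rev (map g w)" and gg: "\<And>x. g (g x) = x"
    using theta_struct[OF assms(2)] by blast
  obtain c a b where gc: "g c = c" and abc: "a \<noteq> c" "b \<noteq> c" "a \<noteq> b"
    using fixed_point[OF assms(1)] gg by blast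
  define w where "w n = (if even n then c else if tm (n div 2) then a else b)" for n
  have wc: "w n = c \<longleftrightarrow> even n" for n unfolding w_def using abc by auto
  have gwc: "g (w n) = c \<longleftrightarrow> even n" for n using wc[of n] gc gg by metis
  have nosw: "w p \<noteq> g (w (p - 1))" if "p > 0" for p
  proof
    assume "w p = g (w (p - 1))"
    then have "even p = even (p - 1)" using wc[of p] gwc[of "p-1"] by metis
    with that show False by (cases p) auto
  qed
  have lenth: "length (\<theta> u) = length u" for u by (simp add: tw)
  have "pseudo_cube_free_inf \<theta> w"
    unfolding pseudo_cube_free_inf_def
  proof (intro allI notI)
    fix i j
    assume "pseudo_cube \<theta> (map w [i..<j])"
    then obtain u1 u2 u3 where ne: "map w [i..<j] \<noteq> []" and L: "map w [i..<j] = u1 @ u2 @ u3"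
      and R: "\<forall>x\<in>{u1, u2, u3}. \<forall>y\<in>{u1, u2, u3}. x = y \<or> x = \<theta> y"
      unfolding pseudo_cube_def by blast
    have r21: "u2 = u1 \<or> u2 = \<theta> u1" and r31: "u3 = u1 \<or> u3 = \<theta> u1"
      and r32: "u3 = u2 \<or> u3 = \<theta> u2" using R by auto
    define k where "k = length u1"
    have l2: "length u2 = k" and l3: "length u3 = k"
      using r21 r31 lenth unfolding k_def by auto
    have lj: "j - i = 3*k" using arg_cong[OF L, of length] l2 l3 k_def by simp
    have k0: "k > 0" using ne lj by auto
    have Ln: "w (i + n) = (u1 @ u2 @ u3) ! n" if "n < 3*k" for n
      using that lj by (metis L add.commute nth_map_upt)
    have n1: "w (i + n) = u1 ! n" if "n < k" for n
      using Ln[of n] that k_def by (simp add: nth_append)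
    have n2: "w (i + k + n) = u2 ! n" if "n < k" for n
      using Ln[of "k+n"] that k_def l2 by (simp add: nth_append add.assoc)
    have n3: "w (i + 2*k + n) = u3 ! n" if "n < k" for n
      using Ln[of "2*k+n"] that k_def l2 l3 by (simp add: nth_append add.assoc)
    have "u2 \<noteq> \<theta> u1"
    proof
      assume "u2 = \<theta> u1"
      then have "u2 ! 0 = g (u1 ! (k - 1))" using k0 k_def by (simp add: tw rev_nth)
      then have "w (i+k) = g (w (i + (k - 1)))" using n1[of "k-1"] n2[of 0] k0 by simp
      moreover have "i + (k - 1) = (i+k) - 1" using k0 by simp
      ultimately show False using nosw[of "i+k"] k0 by simp
    qed
    with r21 have e21: "u2 = u1" by blast
    have "u3 \<noteq> \<theta> u2"
    proof
      assume "u3 = \<theta> u2"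
      then have "u3 ! 0 = g (u2 ! (k - 1))" using k0 l2 by (simp add: tw rev_nth)
      then have "w (i+2*k) = g (w (i + k + (k - 1)))" using n2[of "k-1"] n3[of 0] k0 by simp
      moreover have "i + k + (k - 1) = (i+2*k) - 1" using k0 by simp
      ultimately show False using nosw[of "i+2*k"] k0 by simp
    qed
    with r32 e21 have e31: "u3 = u1" by blast
    have per: "w (i + r) = w (i + r + k)" if "r < 2*k" for r
    proof (cases "r < k")
      case True
      have "w (i + r) = u1 ! r" using n1[OF True] .
      moreover have "w (i + k + r) = u2 ! r" using n2[OF True] .
      moreover have "w (i + r + k) = w (i + k + r)" by (simp add: ac_simps)
      ultimately show ?thesis using e21 by argo
    next
      case False
      define s where "s = r - k"
      have s: "r = k + s" "s < k" using that False unfolding s_def by auto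
      have "w (i + k + s) = u2 ! s" using n2[OF s(2)] .
      moreover have "w (i + 2*k + s) = u3 ! s" using n3[OF s(2)] .
      moreover have e1: "i + r = i + k + s" "i + r + k = i + 2*k + s" using s(1) by simp_all
      moreover have "w (i + r) = w (i + k + s)" "w (i + r + k) = w (i + 2*k + s)" using e1 by metis+
      ultimately show ?thesis using e21 e31 by argo
    qed
    show False
    proof (cases "even k")
      case False
      have "w i = w (i + k)" using per[of 0] k0 by simp
      then show False using wc[of i] wc[of "i+k"] False by auto
    next
      case True
      then obtain m where km: "k = 2*m" by blast
      have m0: "0 < m" using k0 km by simp
      define s where "s = i div 2"
      have "\<forall>q. s \<le> q \<and> q < s + 2*m \<longrightarrow> tm q = tm (q+m)"
      proof (intro allI impI)
        fix q assume q: "s \<le> q \<and> q < s + 2*m"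
        define r where "r = 2*q + 1 - i"
        have d: "2*(i div 2) \<le> i" "i \<le> 2*(i div 2) + 1" by presburger+
        have r1: "i + r = 2*q+1" and r2: "r < 2*k" using q km d unfolding r_def s_def by linarith+
        have r3: "i + r + k = 2*(q+m)+1" using r1 km by simp
        have "w (2*q+1) = w (2*(q+m)+1)" using per[OF r2] r1 r3 by metis
        then show "tm q = tm (q+m)" unfolding w_def using abc by (auto split: if_splits)
      qed
      then show False using tm_cubefree[OF m0] by blast
    qed
  qed
  then show ?thesis by blast
qed

end
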